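(* Let $k\ge 2$ and let $p_1,\dots,p_k\ge 2$ be integers. Then the iterated permutational wreath product $W=C_{p_k}\wr\cdots\wr C_{p_1}$ satisfies $cw(W)=1$.
   Context: Each cyclic group $C_{p_i}$ acts on $\{1,\dots,p_i\}$ by cyclic shifts, and $H\wr C_{p}=H^{p}\rtimes C_{p}$ is the permutational wreath product; the iterated wreath product is associative. The commutator width $cw(G)$ is the least $n$ such that every element of $G'$ is a product of at most $n$ commutators. *)

theory Defs
  imports "HOL-Algebra.Algebra"
begin

fun comm_prods :: "('a, 'b) monoid_scheme \<Rightarrow> nat \<Rightarrow> 'a set" where
  "comm_prods G 0 = {\<one>\<^bsub>G\<^esub>}"
| "comm_prods G (Suc n) = comm_prods G n \<union>
     {c \<otimes>\<^bsub>G\<^esub> z | c z. c \<in> derived_set G (carrier G) \<and> z \<in> comm_prods G n}"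

definition commutator_width :: "('a, 'b) monoid_scheme \<Rightarrow> nat" where
  "commutator_width G = (LEAST n. derived G (carrier G) \<subseteq> comm_prods G n)"

fun wr_points :: "nat list \<Rightarrow> nat list set" where
  "wr_points [] = {[]}"
| "wr_points (p # ps) = {i # x | i x. i < p \<and> x \<in> wr_points ps}"

text \<open>The element (f, a) of H \<wr> C_p = H^p \<rtimes> C_p, realised as a permutation of
  {0..<p} \<times> (points of H), acting by (i, x) \<mapsto> (i + a mod p, f i x);
  identity outside the point set.\<close>
definition wr_elem :: "nat \<Rightarrow> nat list set \<Rightarrow> (nat \<Rightarrow> nat list \<Rightarrow> nat list) \<Rightarrow> nat
    \<Rightarrow> nat list \<Rightarrow> nat list" where
  "wr_elem p S f a y = (case y of [] \<Rightarrow> ([] :: nat list)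
      | i # x \<Rightarrow> (if i < p \<and> x \<in> S then ((i + a) mod p) # f i x else i # x))"

text \<open>Carrier of C_{p_k} \<wr> ... \<wr> C_{p_1} for ps = [p_1,...,p_k] (C_{p_1} acts on top).\<close>
fun wr_carrier :: "nat list \<Rightarrow> (nat list \<Rightarrow> nat list) set" where
  "wr_carrier [] = {id}"
| "wr_carrier (p # ps) = {wr_elem p (wr_points ps) f a | f a.
      a < p \<and> (\<forall>i<p. f i \<in> wr_carrier ps)}"

definition wreath_tower :: "nat list \<Rightarrow> (nat list \<Rightarrow> nat list) monoid" where
  "wreath_tower ps = \<lparr>carrier = wr_carrier ps, monoid.mult = (\<circ>), one = id\<rparr>"

end

theory Submission
  imports Defs
begin


lemma wr_elem_comp:
  assumes "p > 0" "\<forall>i<p. \<forall>x\<in>S. g i x \<in> S"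
  shows "wr_elem p S f a \<circ> wr_elem p S g b
       = wr_elem p S (\<lambda>i. f ((i+b) mod p) \<circ> g i) ((a+b) mod p)"
proof (rule ext)
  fix y show "(wr_elem p S f a \<circ> wr_elem p S g b) y
     = wr_elem p S (\<lambda>i. f ((i+b) mod p) \<circ> g i) ((a+b) mod p) y"
  proof (cases y)
    case Nil then show ?thesis by (simp add: wr_elem_def)
  next
    case (Cons i x)
    show ?thesis
    proof (cases "i < p \<and> x \<in> S")
      case True
      then have "g i x \<in> S" using assms by blast
      moreover have "((i + b) mod p + a) mod p = (i + (a + b) mod p) mod p"
        by (metis add.assoc add.commute mod_add_left_eq mod_add_right_eq)
      moreover have "(i + b) mod p < p" using assms(1) by simp
      ultimately show ?thesis using True Cons
        by (simp only: wr_elem_def o_apply list.case if_True simp_thms)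
    next
      case False
      have e: "wr_elem p S h c (i # x) = i # x" for h c
        using False unfolding wr_elem_def by auto
      show ?thesis using Cons e by simp
    qed
  qed
qed

lemma wr_elem_cong:
  assumes "a mod p = b mod p" "\<forall>i<p. \<forall>x\<in>S. f i x = g i x"
  shows "wr_elem p S f a = wr_elem p S g b"
proof (rule ext)
  fix y
  have e: "(i + a) mod p = (i + b) mod p" for i
    using assms(1) by (metis mod_add_right_eq)
  show "wr_elem p S f a y = wr_elem p S g b y"
    using assms e by (cases y) (auto simp: wr_elem_def)
qed

lemma wr_elem_id: "wr_elem p S (\<lambda>i. id) 0 = id"
proof (rule ext)
  fix y show "wr_elem p S (\<lambda>i. id) 0 y = id y"
    by (cases y) (auto simp: wr_elem_def)
qed

locale wstep =
  fixes p :: nat and ps :: "nat list"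
  assumes p2: "2 \<le> p"
    and grpH: "group (wreath_tower ps)"
    and idout: "\<And>g x. g \<in> wr_carrier ps \<Longrightarrow> x \<notin> wr_points ps \<Longrightarrow> g x = x"
    and pres: "\<And>g x. g \<in> wr_carrier ps \<Longrightarrow> x \<in> wr_points ps \<Longrightarrow> g x \<in> wr_points ps"
    and ne: "wr_points ps \<noteq> {}"
begin

abbreviation "S \<equiv> wr_points ps"
abbreviation "H \<equiv> wreath_tower ps"
abbreviation "W \<equiv> wreath_tower (p # ps)"

sublocale H: group "wreath_tower ps" by (rule grpH)

lemma carrier_H: "carrier H = wr_carrier ps" by (simp add: wreath_tower_def)
lemma mult_H: "x \<otimes>\<^bsub>H\<^esub> y = x \<circ> y" by (simp add: wreath_tower_def)
lemma one_H: "\<one>\<^bsub>H\<^esub> = id" by (simp add: wreath_tower_def)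
lemma mult_W: "x \<otimes>\<^bsub>W\<^esub> y = x \<circ> y" by (simp add: wreath_tower_def)
lemma one_W: "\<one>\<^bsub>W\<^esub> = id" by (simp add: wreath_tower_def)
lemma carrier_W: "carrier W = {wr_elem p S f a | f a. a < p \<and> (\<forall>i<p. f i \<in> carrier H)}"
  by (simp add: wreath_tower_def)

lemma p0: "0 < p" using p2 by simp

lemma presH: "f \<in> carrier H \<Longrightarrow> x \<in> S \<Longrightarrow> f x \<in> S"
  using pres carrier_H by auto
lemma idoutH: "f \<in> carrier H \<Longrightarrow> x \<notin> S \<Longrightarrow> f x = x"
  using idout carrier_H by auto

lemma elem_mult:
  assumes "\<forall>i<p. g i \<in> carrier H"
  shows "wr_elem p S f a \<circ> wr_elem p S g b
       = wr_elem p S (\<lambda>i. f ((i+b) mod p) \<circ> g i) ((a+b) mod p)"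
  using wr_elem_comp[OF p0] assms presH by auto

lemma elemW:
  assumes "g \<in> carrier W"
  obtains f a where "g = wr_elem p S f a" "a < p" "\<forall>i<p. f i \<in> carrier H"
  using assms unfolding carrier_W by blast

lemma elemW_I: "a < p \<Longrightarrow> (\<forall>i<p. f i \<in> carrier H) \<Longrightarrow> wr_elem p S f a \<in> carrier W"
  unfolding carrier_W by blast

lemma id_W: "id \<in> carrier W"
proof -
  have "wr_elem p S (\<lambda>i. id) 0 \<in> carrier W"
    using p0 H.one_closed one_H by (intro elemW_I) auto
  then show ?thesis by (simp add: wr_elem_id)
qed

lemma group_W: "group W"
proof (rule groupI)
  fix x y assume x: "x \<in> carrier W" and y: "y \<in> carrier W"
  obtain f a where f: "x = wr_elem p S f a" "a < p" "\<forall>i<p. f i \<in> carrier H" using elemW[OF x] .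
  obtain g b where g: "y = wr_elem p S g b" "b < p" "\<forall>i<p. g i \<in> carrier H" using elemW[OF y] .
  have "x \<circ> y = wr_elem p S (\<lambda>i. f ((i+b) mod p) \<circ> g i) ((a+b) mod p)"
    using f g elem_mult by simp
  moreover have "wr_elem p S (\<lambda>i. f ((i+b) mod p) \<circ> g i) ((a+b) mod p) \<in> carrier W"
  proof (rule elemW_I)
    show "(a + b) mod p < p" using p0 by simp
    show "\<forall>i<p. f ((i + b) mod p) \<circ> g i \<in> carrier H"
      using f g p0 H.m_closed mult_H by (metis mod_less_divisor)
  qed
  ultimately show "x \<otimes>\<^bsub>W\<^esub> y \<in> carrier W" by (simp add: mult_W)
next
  show "\<one>\<^bsub>W\<^esub> \<in> carrier W" using id_W one_W by simp
next
  fix x y z show "x \<otimes>\<^bsub>W\<^esub> y \<otimes>\<^bsub>W\<^esub> z = x \<otimes>\<^bsub>W\<^esub> (y \<otimes>\<^bsub>W\<^esub> z)"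
    by (simp add: mult_W o_assoc)
next
  fix x show "\<one>\<^bsub>W\<^esub> \<otimes>\<^bsub>W\<^esub> x = x" by (simp add: mult_W one_W)
next
  fix x assume x: "x \<in> carrier W"
  obtain f a where f: "x = wr_elem p S f a" "a < p" "\<forall>i<p. f i \<in> carrier H" using elemW[OF x] .
  define f' where "f' = (\<lambda>j. inv\<^bsub>H\<^esub> (f ((j + (p - a)) mod p)))"
  define y where "y = wr_elem p S f' ((p - a) mod p)"
  have f'c: "\<forall>i<p. f' i \<in> carrier H" unfolding f'_def using f p0 by simp
  have "y \<in> carrier W" unfolding y_def using f'c p0 by (intro elemW_I) auto
  moreover have "y \<circ> x = id"
  proof -
    have "y \<circ> x = wr_elem p S (\<lambda>i. f' ((i+a) mod p) \<circ> f i) (((p - a) mod p + a) mod p)"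
      unfolding y_def using f elem_mult by simp
    also have "\<dots> = wr_elem p S (\<lambda>i. id) 0"
    proof -
      have m: "((p - a) mod p + a) mod p = 0 mod p" using f(2)
        by (metis add.commute le_add_diff_inverse less_imp_le_nat mod_add_right_eq mod_self mod_0)
      have c: "f' ((i + a) mod p) \<circ> f i = id" if i: "i < p" for i
      proof -
        have "((i + a) mod p + (p - a)) mod p = i"
          using i f(2) by (metis add.assoc le_add_diff_inverse less_imp_le_nat mod_add_left_eq mod_add_self2 mod_less)
        then have "f' ((i + a) mod p) = inv\<^bsub>H\<^esub> (f i)" unfolding f'_def by simp
        then show ?thesis using H.l_inv f(3) i mult_H one_H by metis
      qed
      show ?thesis by (rule wr_elem_cong) (use m c in auto)
    qed
    also have "\<dots> = id" by (rule wr_elem_id)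
    finally show ?thesis .
  qed
  ultimately show "\<exists>y\<in>carrier W. y \<otimes>\<^bsub>W\<^esub> x = \<one>\<^bsub>W\<^esub>" by (auto simp: mult_W one_W)
qed

sublocale W: group "wreath_tower (p # ps)" by (rule group_W)

lemma idout_W: "g \<in> wr_carrier (p#ps) \<Longrightarrow> x \<notin> wr_points (p#ps) \<Longrightarrow> g x = x"
  by (cases x) (auto simp: wr_elem_def)

lemma pres_W: "g \<in> wr_carrier (p#ps) \<Longrightarrow> x \<in> wr_points (p#ps) \<Longrightarrow> g x \<in> wr_points (p#ps)"
  using p0 by (auto simp: wr_elem_def pres)

lemma ne_W: "wr_points (p#ps) \<noteq> {}"
  using ne p0 by auto

end


primrec pp :: "(nat \<Rightarrow> nat list \<Rightarrow> nat list) \<Rightarrow> nat \<Rightarrow> nat list \<Rightarrow> nat list" where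
  "pp G 0 = id"
| "pp G (Suc j) = G (Suc j) \<circ> pp G j"

context wstep
begin

abbreviation "N \<equiv> derived H (carrier H)"
abbreviation "Q \<equiv> H Mod derived H (carrier H)"
abbreviation "hN \<equiv> (\<lambda>x. derived H (carrier H) #>\<^bsub>H\<^esub> x)"

sublocale Q: comm_group "H Mod derived H (carrier H)"
  by (rule H.derived_quot_is_comm_group)

sublocale hNh: group_hom H "H Mod derived H (carrier H)" hN
proof (rule group_hom.intro)
  show "group H" by (rule grpH)
  show "group Q" by (rule H.derived_quot_is_group)
  show "group_hom_axioms H Q hN"
    using normal.r_coset_hom_Mod[OF H.derived_self_is_normal]
    by (simp add: group_hom_axioms_def)
qed

definition cmp :: "(nat list \<Rightarrow> nat list) \<Rightarrow> nat \<Rightarrow> nat list \<Rightarrow> nat list" where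
  "cmp g i = (\<lambda>x. if x \<in> S then tl (g (i # x)) else x)"

definition "x0 = (SOME x. x \<in> S)"

definition sh :: "(nat list \<Rightarrow> nat list) \<Rightarrow> nat" where
  "sh g = hd (g (0 # x0))"

definition Phi :: "(nat list \<Rightarrow> nat list) \<Rightarrow> (nat list \<Rightarrow> nat list) set" where
  "Phi g = finprod Q (\<lambda>i. hN (cmp g i)) {..<p}"

lemma x0S: "x0 \<in> S" unfolding x0_def using ne by (simp add: some_in_eq)

lemma cmp_elem:
  assumes "\<forall>i<p. f i \<in> carrier H" "i < p"
  shows "cmp (wr_elem p S f a) i = f i"
proof (rule ext)
  fix x show "cmp (wr_elem p S f a) i x = f i x"
    using assms idoutH[of "f i" x] by (auto simp: cmp_def wr_elem_def)
qed

lemma sh_elem: "a < p \<Longrightarrow> sh (wr_elem p S f a) = a"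
  using x0S p0 by (simp add: sh_def wr_elem_def)

lemma cmp_closed: "g \<in> carrier W \<Longrightarrow> i < p \<Longrightarrow> cmp g i \<in> carrier H"
proof -
  assume g: "g \<in> carrier W" and i: "i < p"
  obtain f a where f: "g = wr_elem p S f a" "a < p" "\<forall>i<p. f i \<in> carrier H" using elemW[OF g] .
  show ?thesis using cmp_elem[OF f(3) i] f i by simp
qed

lemma elem_cmp: "g \<in> carrier W \<Longrightarrow> g = wr_elem p S (cmp g) (sh g)"
proof -
  assume g: "g \<in> carrier W"
  obtain f a where f: "g = wr_elem p S f a" "a < p" "\<forall>i<p. f i \<in> carrier H" using elemW[OF g] .
  have "wr_elem p S f a = wr_elem p S (cmp g) (sh g)"
    by (rule wr_elem_cong) (use f cmp_elem sh_elem in auto)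
  then show ?thesis using f by simp
qed

lemma sh_lt: "g \<in> carrier W \<Longrightarrow> sh g < p"
proof -
  assume g: "g \<in> carrier W"
  obtain f a where f: "g = wr_elem p S f a" "a < p" "\<forall>i<p. f i \<in> carrier H" using elemW[OF g] .
  show ?thesis using f sh_elem by simp
qed

lemma sh_mult: "x \<in> carrier W \<Longrightarrow> y \<in> carrier W \<Longrightarrow> sh (x \<otimes>\<^bsub>W\<^esub> y) = (sh x + sh y) mod p"
proof -
  assume x: "x \<in> carrier W" and y: "y \<in> carrier W"
  obtain f a where f: "x = wr_elem p S f a" "a < p" "\<forall>i<p. f i \<in> carrier H" using elemW[OF x] .
  obtain g b where g: "y = wr_elem p S g b" "b < p" "\<forall>i<p. g i \<in> carrier H" using elemW[OF y] .
  have "x \<otimes>\<^bsub>W\<^esub> y = wr_elem p S (\<lambda>i. f ((i+b) mod p) \<circ> g i) ((a+b) mod p)"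
    using f g elem_mult by (simp add: mult_W)
  then show ?thesis using f g p0 sh_elem by simp
qed

lemma sh_one: "sh \<one>\<^bsub>W\<^esub> = 0"
  using sh_elem[of 0 "\<lambda>i. id"] p0 by (simp add: wr_elem_id one_W)

lemma hN_closed: "x \<in> carrier H \<Longrightarrow> hN x \<in> carrier Q"
  by (rule hNh.hom_closed)

lemma Phi_closed: "g \<in> carrier W \<Longrightarrow> Phi g \<in> carrier Q"
  unfolding Phi_def by (rule Q.finprod_closed) (auto intro: hN_closed cmp_closed)

lemma reindex:
  assumes "\<forall>i<p. F i \<in> carrier Q"
  shows "finprod Q (\<lambda>i. F ((i + b) mod p)) {..<p} = finprod Q F {..<p}"
proof -
  have inj: "inj_on (\<lambda>i. (i + b) mod p) {..<p}"
  proof (rule inj_onI)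
    fix i j assume ij: "i \<in> {..<p}" "j \<in> {..<p}" and e: "(i + b) mod p = (j + b) mod p"
    from e obtain q1 q2 where "i + b + p*q1 = j + b + p*q2" using nat_mod_eq_iff by blast
    then have "i + p*q1 = j + p*q2" by simp
    then have "i mod p = j mod p" using nat_mod_eq_iff by blast
    then show "i = j" using ij by simp
  qed
  have img: "(\<lambda>i. (i + b) mod p) ` {..<p} = {..<p}"
    by (rule endo_inj_surj) (use inj p0 in auto)
  have "finprod Q F ((\<lambda>i. (i + b) mod p) ` {..<p}) = finprod Q (\<lambda>i. F ((i + b) mod p)) {..<p}"
    by (rule Q.finprod_reindex) (use assms img inj in auto)
  then show ?thesis using img by simp
qed

lemma Phi_mult: "x \<in> carrier W \<Longrightarrow> y \<in> carrier W \<Longrightarrow> Phi (x \<otimes>\<^bsub>W\<^esub> y) = Phi x \<otimes>\<^bsub>Q\<^esub> Phi y"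
proof -
  assume x: "x \<in> carrier W" and y: "y \<in> carrier W"
  obtain f a where f: "x = wr_elem p S f a" "a < p" "\<forall>i<p. f i \<in> carrier H" using elemW[OF x] .
  obtain g b where g: "y = wr_elem p S g b" "b < p" "\<forall>i<p. g i \<in> carrier H" using elemW[OF y] .
  define F where "F = (\<lambda>i. f ((i+b) mod p) \<circ> g i)"
  have Fc: "\<forall>i<p. F i \<in> carrier H" unfolding F_def using f g p0 H.m_closed mult_H
    by (metis mod_less_divisor)
  have xy: "x \<otimes>\<^bsub>W\<^esub> y = wr_elem p S F ((a+b) mod p)"
    using f g elem_mult by (simp add: mult_W F_def)
  have fc: "(\<lambda>i. hN (f i)) \<in> {..<p} \<rightarrow> carrier Q" using f hN_closed by auto
  have gc: "(\<lambda>i. hN (g i)) \<in> {..<p} \<rightarrow> carrier Q" using g hN_closed by auto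
  have fc2: "(\<lambda>i. hN (f ((i+b) mod p))) \<in> {..<p} \<rightarrow> carrier Q" using f hN_closed p0 by auto
  have "Phi (x \<otimes>\<^bsub>W\<^esub> y) = finprod Q (\<lambda>i. hN (f ((i+b) mod p)) \<otimes>\<^bsub>Q\<^esub> hN (g i)) {..<p}"
    unfolding Phi_def xy
  proof (rule Q.finprod_cong')
    show "(\<lambda>i. hN (f ((i+b) mod p)) \<otimes>\<^bsub>Q\<^esub> hN (g i)) \<in> {..<p} \<rightarrow> carrier Q"
    proof (rule Pi_I)
      fix i assume "i \<in> {..<p}"
      then show "hN (f ((i+b) mod p)) \<otimes>\<^bsub>Q\<^esub> hN (g i) \<in> carrier Q"
        using f g p0 by (intro Q.m_closed hN_closed) auto
    qed
    fix i assume i: "i \<in> {..<p}"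
    have "cmp (wr_elem p S F ((a + b) mod p)) i = F i" using cmp_elem Fc i by auto
    also have "\<dots> = f ((i+b) mod p) \<otimes>\<^bsub>H\<^esub> g i" by (simp add: F_def mult_H)
    finally show "hN (cmp (wr_elem p S F ((a + b) mod p)) i) = hN (f ((i+b) mod p)) \<otimes>\<^bsub>Q\<^esub> hN (g i)"
      using hNh.hom_mult f g i p0 by simp
  qed simp
  also have "\<dots> = finprod Q (\<lambda>i. hN (f ((i+b) mod p))) {..<p} \<otimes>\<^bsub>Q\<^esub> finprod Q (\<lambda>i. hN (g i)) {..<p}"
    using fc2 gc by (rule Q.finprod_multf)
  also have "finprod Q (\<lambda>i. hN (f ((i+b) mod p))) {..<p} = finprod Q (\<lambda>i. hN (f i)) {..<p}"
    using reindex[of "\<lambda>i. hN (f i)" b] fc by auto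
  also have "finprod Q (\<lambda>i. hN (f i)) {..<p} = Phi x"
    unfolding Phi_def f(1) by (rule Q.finprod_cong') (use fc cmp_elem f in auto)
  also have "finprod Q (\<lambda>i. hN (g i)) {..<p} = Phi y"
    unfolding Phi_def g(1) by (rule Q.finprod_cong') (use gc cmp_elem g in auto)
  finally show ?thesis .
qed

sublocale Phih: group_hom W Q Phi
proof (rule group_hom.intro)
  show "group W" by (rule group_W)
  show "group Q" by (rule H.derived_quot_is_group)
  show "group_hom_axioms W Q Phi"
    by (simp add: group_hom_axioms_def hom_def Phi_closed Phi_mult)
qed

definition "T = {g \<in> carrier W. sh g = 0 \<and> Phi g = \<one>\<^bsub>Q\<^esub>}"

lemma comm_T:
  assumes x: "x \<in> carrier W" and y: "y \<in> carrier W"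
  shows "x \<otimes>\<^bsub>W\<^esub> y \<otimes>\<^bsub>W\<^esub> inv\<^bsub>W\<^esub> x \<otimes>\<^bsub>W\<^esub> inv\<^bsub>W\<^esub> y \<in> T"
proof -
  define h where "h = x \<otimes>\<^bsub>W\<^esub> y \<otimes>\<^bsub>W\<^esub> inv\<^bsub>W\<^esub> x \<otimes>\<^bsub>W\<^esub> inv\<^bsub>W\<^esub> y"
  have hc: "h \<in> carrier W" using h_def x y by simp
  have a1: "(sh x + sh (inv\<^bsub>W\<^esub> x)) mod p = 0"
    using sh_mult[of x "inv\<^bsub>W\<^esub> x"] x sh_one by simp
  have a2: "(sh y + sh (inv\<^bsub>W\<^esub> y)) mod p = 0"
    using sh_mult[of y "inv\<^bsub>W\<^esub> y"] y sh_one by simp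
  have "sh h = (((sh x + sh y) mod p + sh (inv\<^bsub>W\<^esub> x)) mod p + sh (inv\<^bsub>W\<^esub> y)) mod p"
    using h_def x y by (simp add: sh_mult)
  also have "\<dots> = ((sh x + sh (inv\<^bsub>W\<^esub> x)) + (sh y + sh (inv\<^bsub>W\<^esub> y))) mod p"
    by (simp only: mod_add_left_eq) (simp add: add_ac)
  also have "\<dots> = 0" using a1 a2 by (metis add_0 mod_add_eq mod_0)
  finally have s: "sh h = 0" .
  have "Phi h = Phi x \<otimes>\<^bsub>Q\<^esub> Phi y \<otimes>\<^bsub>Q\<^esub> inv\<^bsub>Q\<^esub> Phi x \<otimes>\<^bsub>Q\<^esub> inv\<^bsub>Q\<^esub> Phi y"
    using h_def x y by (simp add: Phih.hom_mult Phih.hom_inv)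
  also have "\<dots> = \<one>\<^bsub>Q\<^esub>"
  proof -
    have A: "Phi x \<in> carrier Q" "Phi y \<in> carrier Q" using x y Phi_closed by auto
    have "Phi x \<otimes>\<^bsub>Q\<^esub> Phi y \<otimes>\<^bsub>Q\<^esub> inv\<^bsub>Q\<^esub> Phi x = Phi y"
      using A by (metis Q.inv_closed Q.m_assoc Q.m_comm Q.r_inv Q.r_one)
    then show ?thesis using A Q.r_inv[of "Phi y"] by (simp only:)
  qed
  finally show ?thesis unfolding T_def using hc s h_def by simp
qed

lemma derived_T: "derived W (carrier W) \<subseteq> T"
proof
  fix c assume "c \<in> derived W (carrier W)"
  then show "c \<in> T" unfolding derived_def
  proof (induction rule: generate.induct)
    case one then show ?case unfolding T_def using sh_one by simp
  next
    case (incl h)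
    then show ?case using comm_T by blast
  next
    case (inv h)
    then obtain x y where x: "x \<in> carrier W" and y: "y \<in> carrier W"
      and h: "h = x \<otimes>\<^bsub>W\<^esub> y \<otimes>\<^bsub>W\<^esub> inv\<^bsub>W\<^esub> x \<otimes>\<^bsub>W\<^esub> inv\<^bsub>W\<^esub> y" by blast
    have "inv\<^bsub>W\<^esub> h = y \<otimes>\<^bsub>W\<^esub> x \<otimes>\<^bsub>W\<^esub> inv\<^bsub>W\<^esub> y \<otimes>\<^bsub>W\<^esub> inv\<^bsub>W\<^esub> x"
      using x y h by (simp add: W.inv_mult_group W.m_assoc)
    then show ?case using comm_T x y by simp
  next
    case (eng h1 h2)
    then have h: "h1 \<in> carrier W" "h2 \<in> carrier W" "sh h1 = 0" "sh h2 = 0"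
      "Phi h1 = \<one>\<^bsub>Q\<^esub>" "Phi h2 = \<one>\<^bsub>Q\<^esub>" unfolding T_def by auto
    have "Phi (h1 \<otimes>\<^bsub>W\<^esub> h2) = Phi h1 \<otimes>\<^bsub>Q\<^esub> Phi h2" using h(1,2) by (rule Phih.hom_mult)
    also have "\<dots> = \<one>\<^bsub>Q\<^esub> \<otimes>\<^bsub>Q\<^esub> \<one>\<^bsub>Q\<^esub>" using h by (simp only:)
    also have "\<dots> = \<one>\<^bsub>Q\<^esub>" by (rule Q.l_one[OF Q.one_closed])
    finally show ?case unfolding T_def using h sh_mult by simp
  qed
qed

end


lemma (in group) cancel1: "a \<in> carrier G \<Longrightarrow> b \<in> carrier G \<Longrightarrow> a \<otimes> inv b \<otimes> b = a"
  by (simp add: m_assoc)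
lemma (in group) cancel2: "a \<in> carrier G \<Longrightarrow> b \<in> carrier G \<Longrightarrow> a \<otimes> b \<otimes> inv b = a"
  by (simp add: m_assoc)

lemma (in group) comm_solve:
  assumes c: "g \<in> carrier G" "u \<in> carrier G" "v \<in> carrier G" and e: "g \<otimes> v \<otimes> u = u \<otimes> v"
  shows "g = u \<otimes> v \<otimes> inv u \<otimes> inv v"
proof -
  have "u \<otimes> v \<otimes> inv u \<otimes> inv v = g \<otimes> v \<otimes> u \<otimes> inv u \<otimes> inv v" by (simp only: e)
  also have "\<dots> = g" using c by (simp add: cancel2)
  finally show ?thesis by simp
qed

lemma (in group) comm_one:
  assumes c: "u \<in> carrier G" "v \<in> carrier G" and e: "u \<otimes> v \<otimes> inv u \<otimes> inv v = \<one>"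
  shows "u \<otimes> v = v \<otimes> u"
proof -
  have "u \<otimes> v \<otimes> inv u \<otimes> inv v \<otimes> v \<otimes> u = u \<otimes> v" using c by (simp add: cancel1)
  then show ?thesis using e c by simp
qed

context wstep
begin

lemma pp_prop:
  assumes G: "\<forall>i<p. G i \<in> carrier H"
  shows "j < p \<Longrightarrow> pp G j \<in> carrier H \<and> hN (pp G j) = finprod Q (\<lambda>i. hN (G i)) {Suc 0..j}"
proof (induction j)
  case 0
  have e: "pp G 0 = \<one>\<^bsub>H\<^esub>" by (simp add: one_H)
  show ?case unfolding e using H.one_closed hNh.hom_one by simp
next
  case (Suc j)
  then have IH: "pp G j \<in> carrier H" "hN (pp G j) = finprod Q (\<lambda>i. hN (G i)) {Suc 0..j}" by auto
  have Gj: "G (Suc j) \<in> carrier H" using G Suc.prems by simp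
  have c: "pp G (Suc j) \<in> carrier H" using IH Gj H.m_closed mult_H by simp
  have "hN (pp G (Suc j)) = hN (G (Suc j) \<otimes>\<^bsub>H\<^esub> pp G j)" by (simp add: mult_H)
  also have "\<dots> = hN (G (Suc j)) \<otimes>\<^bsub>Q\<^esub> hN (pp G j)" using Gj IH(1) by (rule hNh.hom_mult)
  also have "\<dots> = hN (G (Suc j)) \<otimes>\<^bsub>Q\<^esub> finprod Q (\<lambda>i. hN (G i)) {Suc 0..j}" using IH by simp
  also have "\<dots> = finprod Q (\<lambda>i. hN (G i)) (insert (Suc j) {Suc 0..j})"
    by (rule Q.finprod_insert[symmetric]) (use G Suc.prems hN_closed in auto)
  also have "insert (Suc j) {Suc 0..j} = {Suc 0..Suc j}" by auto
  finally show ?case using c by blast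
qed

lemma T_comm:
  assumes ih: "N \<subseteq> derived_set H (carrier H)" and gT: "g \<in> T"
  shows "g \<in> derived_set W (carrier W)"
proof -
  have gW: "g \<in> carrier W" and sh0: "sh g = 0" and Ph: "Phi g = \<one>\<^bsub>Q\<^esub>" using gT unfolding T_def by auto
  define G where "G = cmp g"
  have Gc: "\<forall>i<p. G i \<in> carrier H" unfolding G_def using gW cmp_closed by auto
  have gG: "g = wr_elem p S G 0" unfolding G_def using elem_cmp[OF gW] sh0 by simp
  define A where "A = pp G (p - 1)"
  have Ac: "A \<in> carrier H" and hA: "hN A = finprod Q (\<lambda>i. hN (G i)) {Suc 0..p-1}"
    unfolding A_def using pp_prop[OF Gc, of "p - 1"] p0 by auto
  define P where "P = A \<otimes>\<^bsub>H\<^esub> G 0"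
  have G0: "G 0 \<in> carrier H" using Gc p0 by simp
  have Pc: "P \<in> carrier H" unfolding P_def using Ac G0 by simp
  have "hN P = hN A \<otimes>\<^bsub>Q\<^esub> hN (G 0)" unfolding P_def using Ac G0 by (rule hNh.hom_mult)
  also have "\<dots> = hN (G 0) \<otimes>\<^bsub>Q\<^esub> finprod Q (\<lambda>i. hN (G i)) {Suc 0..p-1}"
    unfolding hA by (rule Q.m_comm) (use Gc G0 in \<open>auto intro!: Q.finprod_closed hN_closed\<close>)
  also have "\<dots> = finprod Q (\<lambda>i. hN (G i)) (insert 0 {Suc 0..p-1})"
    by (rule Q.finprod_insert[symmetric]) (use Gc G0 hN_closed in auto)
  also have "insert 0 {Suc 0..p-1} = {..<p}" using p0 by auto
  also have "finprod Q (\<lambda>i. hN (G i)) {..<p} = Phi g" unfolding Phi_def G_def ..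
  finally have "hN P = \<one>\<^bsub>Q\<^esub>" using Ph by simp
  then have hP: "N #>\<^bsub>H\<^esub> P = N" by (simp add: FactGroup_def)
  have "P \<in> N #>\<^bsub>H\<^esub> P"
    by (rule H.rcos_self[OF Pc]) (rule H.derived_is_subgroup, simp)
  then have "P \<in> N" using hP by simp
  then have "P \<in> derived_set H (carrier H)" using ih by blast
  then obtain x y where x: "x \<in> carrier H" and y: "y \<in> carrier H"
    and Pxy: "P = x \<otimes>\<^bsub>H\<^esub> y \<otimes>\<^bsub>H\<^esub> inv\<^bsub>H\<^esub> x \<otimes>\<^bsub>H\<^esub> inv\<^bsub>H\<^esub> y" by blast
  define z where "z = inv\<^bsub>H\<^esub> A \<otimes>\<^bsub>H\<^esub> x"
  have zc: "z \<in> carrier H" unfolding z_def using Ac x by simp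
  define U where "U = (\<lambda>j. pp G j \<circ> z)"
  define k where "k = (\<lambda>i. if i = p - 1 then y else (id :: nat list \<Rightarrow> nat list))"
  have Uc: "\<forall>j<p. U j \<in> carrier H"
  proof (intro allI impI)
    fix j assume "j < p"
    then have "pp G j \<in> carrier H" using pp_prop[OF Gc] by blast
    then have "pp G j \<otimes>\<^bsub>H\<^esub> z \<in> carrier H" using zc by simp
    then show "U j \<in> carrier H" unfolding U_def by (simp add: mult_H)
  qed
  have kc: "\<forall>i<p. k i \<in> carrier H" unfolding k_def using y H.one_closed one_H by auto
  define u where "u = wr_elem p S U 0"
  define v where "v = wr_elem p S k 1"
  have uW: "u \<in> carrier W" unfolding u_def using Uc p0 by (intro elemW_I) auto
  have vW: "v \<in> carrier W" unfolding v_def using kc p2 by (intro elemW_I) auto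
  have key: "(G ((i + 1) mod p) \<circ> k i) \<circ> U i = U ((i + 1) mod p) \<circ> k i" if i: "i < p" for i
  proof (cases "i + 1 < p")
    case True
    then have "(i + 1) mod p = Suc i" "k i = id" unfolding k_def by auto
    then show ?thesis unfolding U_def by (simp add: o_assoc)
  next
    case False
    then have ip: "i = p - 1" using i by simp
    then have m: "(i + 1) mod p = 0" "k i = y" "U i = A \<circ> z" unfolding k_def U_def A_def
      using p0 by auto
    have G0e: "G 0 = inv\<^bsub>H\<^esub> A \<otimes>\<^bsub>H\<^esub> P" unfolding P_def using Ac G0
      by (simp add: H.m_assoc[symmetric])
    have "A \<otimes>\<^bsub>H\<^esub> z = x" unfolding z_def using Ac x by (simp add: H.m_assoc[symmetric])
    then have "G 0 \<otimes>\<^bsub>H\<^esub> y \<otimes>\<^bsub>H\<^esub> (A \<otimes>\<^bsub>H\<^esub> z) = inv\<^bsub>H\<^esub> A \<otimes>\<^bsub>H\<^esub> P \<otimes>\<^bsub>H\<^esub> y \<otimes>\<^bsub>H\<^esub> x"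
      using G0e by simp
    also have "\<dots> = inv\<^bsub>H\<^esub> A \<otimes>\<^bsub>H\<^esub> (P \<otimes>\<^bsub>H\<^esub> y \<otimes>\<^bsub>H\<^esub> x)"
      using Ac Pc x y by (simp add: H.m_assoc)
    also have "P \<otimes>\<^bsub>H\<^esub> y \<otimes>\<^bsub>H\<^esub> x = x \<otimes>\<^bsub>H\<^esub> y"
      unfolding Pxy using x y by (simp add: H.cancel1)
    also have "inv\<^bsub>H\<^esub> A \<otimes>\<^bsub>H\<^esub> (x \<otimes>\<^bsub>H\<^esub> y) = z \<otimes>\<^bsub>H\<^esub> y"
      unfolding z_def using Ac x y by (simp add: H.m_assoc)
    finally have e: "G 0 \<circ> y \<circ> (A \<circ> z) = z \<circ> y" by (simp only: mult_H)
    have "U 0 = z" unfolding U_def by simp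
    then show ?thesis using m e by simp
  qed
  have "g \<circ> v \<circ> u = u \<circ> v"
  proof -
    have "g \<circ> v = wr_elem p S (\<lambda>i. G ((i + 1) mod p) \<circ> k i) ((0 + 1) mod p)"
      unfolding gG v_def using kc by (rule elem_mult)
    then have "g \<circ> v \<circ> u = wr_elem p S (\<lambda>i. (\<lambda>i. G ((i + 1) mod p) \<circ> k i) ((i + 0) mod p) \<circ> U i)
        (((0 + 1) mod p + 0) mod p)"
      unfolding u_def using Uc by (simp add: elem_mult)
    also have "\<dots> = wr_elem p S (\<lambda>i. U ((i + 1) mod p) \<circ> k i) ((0 + 1) mod p)"
      by (rule wr_elem_cong) (use key in auto)
    also have "\<dots> = u \<circ> v" unfolding u_def v_def using kc by (rule elem_mult[symmetric])
    finally show ?thesis .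
  qed
  then have "g \<otimes>\<^bsub>W\<^esub> v \<otimes>\<^bsub>W\<^esub> u = u \<otimes>\<^bsub>W\<^esub> v" by (simp add: mult_W)
  then have "g = u \<otimes>\<^bsub>W\<^esub> v \<otimes>\<^bsub>W\<^esub> inv\<^bsub>W\<^esub> u \<otimes>\<^bsub>W\<^esub> inv\<^bsub>W\<^esub> v"
    using gW uW vW W.comm_solve by blast
  then show ?thesis using uW vW by blast
qed

lemma derived_W: "N \<subseteq> derived_set H (carrier H) \<Longrightarrow> derived W (carrier W) \<subseteq> derived_set W (carrier W)"
  using derived_T T_comm by blast

lemma nontriv_W: "\<exists>t\<in>carrier W. \<exists>x\<in>wr_points (p#ps). t x \<noteq> x"
proof -
  define t where "t = wr_elem p S (\<lambda>i. id) 1"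
  have tW: "t \<in> carrier W" unfolding t_def using p2 H.one_closed one_H by (intro elemW_I) auto
  have m: "1 mod p = 1" using p2 by simp
  have "t (0 # x0) = 1 # x0" unfolding t_def using x0S p0 m by (simp add: wr_elem_def)
  then have ne: "t (0 # x0) \<noteq> 0 # x0" by simp
  have "0 # x0 \<in> wr_points (p#ps)" using x0S p0 by simp
  then show ?thesis using tW ne by blast
qed

lemma noncomm_W:
  assumes "t \<in> carrier H" "x \<in> S" "t x \<noteq> x"
  shows "\<not> derived W (carrier W) \<subseteq> {\<one>\<^bsub>W\<^esub>}"
proof
  assume sub: "derived W (carrier W) \<subseteq> {\<one>\<^bsub>W\<^esub>}"
  define u where "u = wr_elem p S (\<lambda>i. if i = 0 then t else id) 0"
  define v where "v = wr_elem p S (\<lambda>i. id) 1"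
  have uW: "u \<in> carrier W" unfolding u_def using assms H.one_closed one_H p0 by (intro elemW_I) auto
  have vW: "v \<in> carrier W" unfolding v_def using p2 H.one_closed one_H by (intro elemW_I) auto
  have "u \<otimes>\<^bsub>W\<^esub> v \<otimes>\<^bsub>W\<^esub> inv\<^bsub>W\<^esub> u \<otimes>\<^bsub>W\<^esub> inv\<^bsub>W\<^esub> v \<in> derived W (carrier W)"
    unfolding derived_def using uW vW by (intro generate.incl) blast
  then have "u \<otimes>\<^bsub>W\<^esub> v \<otimes>\<^bsub>W\<^esub> inv\<^bsub>W\<^esub> u \<otimes>\<^bsub>W\<^esub> inv\<^bsub>W\<^esub> v = \<one>\<^bsub>W\<^esub>" using sub by blast
  then have "u \<otimes>\<^bsub>W\<^esub> v = v \<otimes>\<^bsub>W\<^esub> u" using uW vW W.comm_one by blast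
  then have e: "(u \<circ> v) (0 # x) = (v \<circ> u) (0 # x)" by (simp add: mult_W)
  have tx: "t x \<in> S" using assms presH by blast
  have m: "1 mod p = 1" using p2 by simp
  have "v (0 # x) = 1 # x" unfolding v_def using assms(2) p0 m by (simp add: wr_elem_def)
  moreover have "u (1 # x) = 1 # x" unfolding u_def using assms(2) p2 by (simp add: wr_elem_def)
  ultimately have "(u \<circ> v) (0 # x) = 1 # x" by simp
  moreover have "u (0 # x) = 0 # t x" unfolding u_def using assms(2) p0 by (simp add: wr_elem_def)
  moreover have "v (0 # t x) = 1 # t x" unfolding v_def using tx p0 m by (simp add: wr_elem_def)
  ultimately have "(v \<circ> u) (0 # x) = 1 # t x" by simp
  with e \<open>(u \<circ> v) (0 # x) = 1 # x\<close> show False using assms(3) by simp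
qed

end

lemma tower_props:
  "\<forall>q\<in>set ps. 2 \<le> q \<Longrightarrow> group (wreath_tower ps)
    \<and> (\<forall>g x. g \<in> wr_carrier ps \<longrightarrow> x \<notin> wr_points ps \<longrightarrow> g x = x)
    \<and> (\<forall>g x. g \<in> wr_carrier ps \<longrightarrow> x \<in> wr_points ps \<longrightarrow> g x \<in> wr_points ps)
    \<and> wr_points ps \<noteq> {}
    \<and> derived (wreath_tower ps) (carrier (wreath_tower ps))
        \<subseteq> derived_set (wreath_tower ps) (carrier (wreath_tower ps))"
proof (induction ps)
  case Nil
  have grp: "group (wreath_tower [])"
    by (rule groupI) (auto simp: wreath_tower_def)
  interpret G0: group "wreath_tower []" by (rule grp)
  have "derived (wreath_tower []) (carrier (wreath_tower [])) \<subseteq> carrier (wreath_tower [])"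
    by (rule G0.derived_in_carrier) simp
  also have "carrier (wreath_tower []) = {\<one>\<^bsub>wreath_tower []\<^esub>}" by (simp add: wreath_tower_def)
  also have "{\<one>\<^bsub>wreath_tower []\<^esub>} \<subseteq> derived_set (wreath_tower []) (carrier (wreath_tower []))"
  proof -
    have "\<one>\<^bsub>wreath_tower []\<^esub> = \<one>\<^bsub>wreath_tower []\<^esub> \<otimes>\<^bsub>wreath_tower []\<^esub> \<one>\<^bsub>wreath_tower []\<^esub>
       \<otimes>\<^bsub>wreath_tower []\<^esub> inv\<^bsub>wreath_tower []\<^esub> \<one>\<^bsub>wreath_tower []\<^esub>
       \<otimes>\<^bsub>wreath_tower []\<^esub> inv\<^bsub>wreath_tower []\<^esub> \<one>\<^bsub>wreath_tower []\<^esub>" by simp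
    then show ?thesis using G0.one_closed by blast
  qed
  finally have D: "derived (wreath_tower []) (carrier (wreath_tower []))
        \<subseteq> derived_set (wreath_tower []) (carrier (wreath_tower []))" .
  have R: "(\<forall>g x. g \<in> wr_carrier [] \<longrightarrow> x \<notin> wr_points [] \<longrightarrow> g x = x)
    \<and> (\<forall>g x. g \<in> wr_carrier [] \<longrightarrow> x \<in> wr_points [] \<longrightarrow> g x \<in> wr_points [])
    \<and> wr_points [] \<noteq> {}" by simp
  show ?case using grp D R by blast
next
  case (Cons p ps)
  then have IH: "group (wreath_tower ps)"
    "\<forall>g x. g \<in> wr_carrier ps \<longrightarrow> x \<notin> wr_points ps \<longrightarrow> g x = x"
    "\<forall>g x. g \<in> wr_carrier ps \<longrightarrow> x \<in> wr_points ps \<longrightarrow> g x \<in> wr_points ps"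
    "wr_points ps \<noteq> {}"
    "derived (wreath_tower ps) (carrier (wreath_tower ps))
        \<subseteq> derived_set (wreath_tower ps) (carrier (wreath_tower ps))"
    and p2: "2 \<le> p" by auto
  interpret ws: wstep p ps
    by (rule wstep.intro) (use IH p2 in auto)
  show ?case using ws.group_W ws.idout_W ws.pres_W ws.ne_W ws.derived_W[OF IH(5)] by blast
qed



theorem corollary2:
  fixes ps :: "nat list"
  assumes "length ps \<ge> 2"
    and "\<forall>p \<in> set ps. p \<ge> 2"
  shows "commutator_width (wreath_tower ps) = 1"
proof -
  obtain p q rest where ps: "ps = p # q # rest"
  proof (cases ps)
    case Nil then show ?thesis using assms(1) by simp
  next
    case (Cons p ps')
    then show ?thesis
    proof (cases ps')
      case Nil then show ?thesis using assms(1) Cons by simp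
    next
      case (Cons q rest)
      then show ?thesis using \<open>ps = p # ps'\<close> that by blast
    qed
  qed
  have p2: "2 \<le> p" and q2: "2 \<le> q" and r2: "\<forall>x\<in>set rest. 2 \<le> x" using assms(2) ps by auto
  have A1: "\<forall>x\<in>set (q # rest). 2 \<le> x" using q2 r2 by simp
  note P1 = tower_props[OF A1]
  note P2 = tower_props[OF r2]
  interpret ws: wstep p "q # rest"
    by (rule wstep.intro) (use P1 p2 in auto)
  interpret ws2: wstep q rest
    by (rule wstep.intro) (use P2 q2 in auto)
  let ?W = "wreath_tower ps"
  have D: "derived ?W (carrier ?W) \<subseteq> derived_set ?W (carrier ?W)"
    unfolding ps using ws.derived_W P1 by blast
  obtain t x where t: "t \<in> carrier (wreath_tower (q # rest))" "x \<in> wr_points (q # rest)" "t x \<noteq> x"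
    using ws2.nontriv_W by blast
  have ND: "\<not> derived ?W (carrier ?W) \<subseteq> {\<one>\<^bsub>?W\<^esub>}"
    unfolding ps using ws.noncomm_W[OF t] .
  have C1: "derived ?W (carrier ?W) \<subseteq> comm_prods ?W 1"
  proof
    fix c assume "c \<in> derived ?W (carrier ?W)"
    then have c: "c \<in> derived_set ?W (carrier ?W)" using D by blast
    then have cc: "c \<in> carrier ?W" using ws.W.derived_set_in_carrier[of "carrier ?W"] ps by blast
    then have "c = c \<otimes>\<^bsub>?W\<^esub> \<one>\<^bsub>?W\<^esub>" using ps by simp
    then have "c \<in> {c \<otimes>\<^bsub>?W\<^esub> z | c z. c \<in> derived_set ?W (carrier ?W) \<and> z \<in> comm_prods ?W 0}"
      using c by auto
    then show "c \<in> comm_prods ?W 1" by simp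
  qed
  show ?thesis unfolding commutator_width_def
  proof (rule Least_equality)
    show "derived ?W (carrier ?W) \<subseteq> comm_prods ?W 1" by (rule C1)
    fix y assume y: "derived ?W (carrier ?W) \<subseteq> comm_prods ?W y"
    show "1 \<le> y"
    proof (rule ccontr)
      assume "\<not> 1 \<le> y"
      then have "y = 0" by simp
      then show False using y ND by simp
    qed
  qed
qed

end
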